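(* Let $n>1$ be an integer with $F_n=D_n$, and let $p$ be the largest prime divisor of $n$. Then $F_{n/p}=D_{n/p}$ and $F_{np}=D_{np}$.
   Context: For a composite integer $m$, let $d(m)$ denote the largest divisor of $m$ with $1<d(m)<m$. Define $f$ on integers $m>1$ by $f(m)=m-1$ if $m$ is prime and $f(m)=m-d(m)$ if $m$ is composite. Let $f^{(0)}(m)=m$, $f^{(i)}=f\circ f^{(i-1)}$. Define $F_m=\{m,f(m),f^{(2)}(m),\dots,1\}$, the set of iterates of $f$ from $m$ up to and including the first occurrence of $1$ (with $F_1=\{1\}$), and let $D_m$ be the set of positive divisors of $m$. *)

theory Defs
  imports "HOL-Computational_Algebra.Primes"
begin

definition dlarge :: "nat \<Rightarrow> nat" where
  "dlarge m = Max {d. d dvd m \<and> 1 < d \<and> d < m}"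

definition fstep :: "nat \<Rightarrow> nat" where
  "fstep m = (if prime m then m - 1 else m - dlarge m)"

text \<open>F_m: iterates of f from m up to and including the first occurrence of 1.\<close>
definition Fset :: "nat \<Rightarrow> nat set" where
  "Fset m = {(fstep ^^ i) m | i. \<forall>j<i. (fstep ^^ j) m \<noteq> 1}"

definition Dset :: "nat \<Rightarrow> nat set" where
  "Dset m = {d. 0 < d \<and> d dvd m}"

end

theory Submission
  imports Defs
begin

lemma least_prime_ex:
  fixes k :: nat assumes "k > 1"
  shows "\<exists>q. prime q \<and> q dvd k \<and> (\<forall>r. prime r \<and> r dvd k \<longrightarrow> q \<le> r)"
proof -
  have ex: "\<exists>q. prime q \<and> q dvd k" using prime_factor_nat[of k] assms by auto
  define q where "q = (LEAST q. prime q \<and> q dvd k)"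
  have "prime q \<and> q dvd k" unfolding q_def by (rule LeastI_ex[OF ex])
  moreover have "\<forall>r. prime r \<and> r dvd k \<longrightarrow> q \<le> r" unfolding q_def by (auto intro: Least_le)
  ultimately show ?thesis by blast
qed

lemma dlarge_eq:
  fixes k q :: nat
  assumes k: "k > 1" "\<not> prime k" and q: "prime q" "q dvd k"
    and min: "\<forall>r. prime r \<and> r dvd k \<longrightarrow> q \<le> r"
  shows "dlarge k = k div q"
proof -
  define S where "S = {d. d dvd k \<and> 1 < d \<and> d < k}"
  have fin: "finite S" unfolding S_def by auto
  have q1: "q > 1" using q prime_gt_1_nat by blast
  have "q \<le> k" using q k by (simp add: dvd_imp_le)
  moreover have "q \<noteq> k" using q k by auto
  ultimately have qk: "q < k" by simp
  obtain e where e: "k = q * e" using q by blast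
  have e1: "e > 1"
  proof (rule ccontr)
    assume "\<not> e > 1"
    then have "e = 0 \<or> e = 1" by auto
    then show False using e k qk by auto
  qed
  have ek: "e < k" using e q1 e1 by simp
  have "k div q = e" using e q1 by simp
  hence mem: "k div q \<in> S" unfolding S_def using e e1 ek by auto
  have le: "d \<le> k div q" if "d \<in> S" for d
  proof -
    from that obtain c where c: "k = d * c" and d1: "1 < d" and dk: "d < k" unfolding S_def by auto
    have "c \<noteq> 0" using c k by auto
    moreover have "c \<noteq> 1" using c dk by auto
    ultimately have c1: "c > 1" by simp
    obtain r where r: "prime r" "r dvd c" using prime_factor_nat[of c] c1 by auto
    have "r dvd k" using r c by simp
    hence "q \<le> r" using min r by auto
    also have "r \<le> c" using r c1 by (simp add: dvd_imp_le)
    finally have "q \<le> c" .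
    hence "d * q \<le> d * c" by simp
    hence "d * q \<le> k" using c by simp
    thus ?thesis using q1 by (simp add: less_eq_div_iff_mult_less_eq)
  qed
  have "Max S = k div q" using fin mem le by (intro Max_eqI) auto
  thus ?thesis unfolding dlarge_def S_def by simp
qed

lemma fstep_eq:
  fixes k q :: nat
  assumes k: "k > 1" and q: "prime q" "q dvd k"
    and min: "\<forall>r. prime r \<and> r dvd k \<longrightarrow> q \<le> r"
  shows "fstep k = (k div q) * (q - 1)"
proof (cases "prime k")
  case True
  then have "q = k" using q by (simp add: primes_dvd_imp_eq)
  then show ?thesis using True k by (simp add: fstep_def)
next
  case False
  then have "fstep k = k - k div q" using dlarge_eq[OF k False q min] by (simp add: fstep_def)
  moreover obtain e where e: "k = q * e" using q by blast
  moreover have "q > 0" using q prime_gt_0_nat by blast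
  ultimately show ?thesis by (simp add: diff_mult_distrib2 mult.commute)
qed

lemma fstep_bounds:
  fixes k :: nat assumes "k > 1" shows "fstep k < k \<and> fstep k \<ge> 1"
proof -
  obtain q where q: "prime q" "q dvd k" "\<forall>r. prime r \<and> r dvd k \<longrightarrow> q \<le> r"
    using least_prime_ex[OF assms] by blast
  have f: "fstep k = (k div q) * (q - 1)" using fstep_eq[OF assms q] .
  obtain e where e: "k = q * e" using q by blast
  have q1: "q > 1" using q prime_gt_1_nat by blast
  have e0: "e > 0" using e assms by (cases e) auto
  have "k div q = e" using e q1 by simp
  moreover have "e * (q - 1) \<ge> 1" using e0 q1 by simp
  moreover have "e * (q - 1) < q * e" using e0 q1 by (simp add: diff_mult_distrib2 mult.commute)
  ultimately show ?thesis using f e by (simp add: mult.commute)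
qed

lemma Fset_1: "Fset 1 = {1}"
proof -
  have "Fset 1 = {(fstep ^^ i) 1 | i. \<forall>j<i. (fstep ^^ j) 1 \<noteq> 1}" by (simp add: Fset_def)
  also have "\<dots> = {1}"
  proof
    show "{(fstep ^^ i) 1 | i. \<forall>j<i. (fstep ^^ j) 1 \<noteq> 1} \<subseteq> {1}"
    proof
      fix x assume "x \<in> {(fstep ^^ i) 1 | i. \<forall>j<i. (fstep ^^ j) 1 \<noteq> 1}"
      then obtain i where x: "x = (fstep ^^ i) 1" and h: "\<forall>j<i. (fstep ^^ j) 1 \<noteq> 1" by blast
      have "i = 0" using h[rule_format, of 0] by (cases i) auto
      thus "x \<in> {1}" using x by simp
    qed
    show "{1} \<subseteq> {(fstep ^^ i) 1 | i. \<forall>j<i. (fstep ^^ j) 1 \<noteq> 1}"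
      by (auto intro!: exI[of _ 0])
  qed
  finally show ?thesis .
qed

lemma Fset_Suc0: "Fset (Suc 0) = {Suc 0}" using Fset_1 by simp

lemma Fset_step:
  assumes "m \<noteq> 1" shows "Fset m = insert m (Fset (fstep m))"
proof
  show "Fset m \<subseteq> insert m (Fset (fstep m))"
  proof
    fix x assume "x \<in> Fset m"
    then obtain i where x: "x = (fstep ^^ i) m" and h: "\<forall>j<i. (fstep ^^ j) m \<noteq> 1"
      unfolding Fset_def by blast
    show "x \<in> insert m (Fset (fstep m))"
    proof (cases i)
      case 0 then show ?thesis using x by simp
    next
      case (Suc i')
      have "x = (fstep ^^ i') (fstep m)" using x Suc by (simp add: funpow_swap1)
      moreover have "\<forall>j<i'. (fstep ^^ j) (fstep m) \<noteq> 1"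
      proof (intro allI impI)
        fix j assume "j < i'"
        then have "Suc j < i" using Suc by simp
        then show "(fstep ^^ j) (fstep m) \<noteq> 1" using h[rule_format, of "Suc j"]
          by (simp add: funpow_swap1)
      qed
      ultimately show ?thesis unfolding Fset_def by blast
    qed
  qed
  show "insert m (Fset (fstep m)) \<subseteq> Fset m"
  proof
    fix x assume "x \<in> insert m (Fset (fstep m))"
    then consider "x = m" | "x \<in> Fset (fstep m)" by blast
    then show "x \<in> Fset m"
    proof cases
      case 1 then show ?thesis unfolding Fset_def by (auto intro!: exI[of _ 0])
    next
      case 2
      then obtain i where x: "x = (fstep ^^ i) (fstep m)" and h: "\<forall>j<i. (fstep ^^ j) (fstep m) \<noteq> 1"
        unfolding Fset_def by blast
      have "x = (fstep ^^ Suc i) m" using x by (simp only: funpow_Suc_right comp_def)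
      moreover have "\<forall>j<Suc i. (fstep ^^ j) m \<noteq> 1"
      proof (intro allI impI)
        fix j assume j: "j < Suc i"
        show "(fstep ^^ j) m \<noteq> 1"
        proof (cases j)
          case 0 then show ?thesis using assms by simp
        next
          case (Suc j') then show ?thesis using h[rule_format, of j'] j
            by (simp add: funpow_swap1)
        qed
      qed
      ultimately show ?thesis unfolding Fset_def by blast
    qed
  qed
qed

lemma Fset_bound: "k \<ge> 1 \<Longrightarrow> Fset k \<subseteq> {1..k}"
proof (induction k rule: less_induct)
  case (less k)
  show ?case
  proof (cases "k = 1")
    case True then show ?thesis by (simp add: Fset_Suc0)
  next
    case False
    then have k1: "k > 1" using less.prems by simp
    have b: "fstep k < k \<and> fstep k \<ge> 1" using fstep_bounds[OF k1] .
    have "Fset (fstep k) \<subseteq> {1..fstep k}" using less.IH b by blast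
    then show ?thesis using Fset_step[OF False] b less.prems by auto
  qed
qed

lemma Fset_mult:
  fixes p :: nat
  assumes p: "prime p"
  shows "m \<ge> 1 \<Longrightarrow> (\<forall>q. prime q \<and> q dvd m \<longrightarrow> q \<le> p) \<Longrightarrow>
    Fset (m * p) = (\<lambda>x. p * x) ` Fset m \<union> Fset (p - 1)"
proof (induction m rule: less_induct)
  case (less m)
  have p1: "p > 1" using p prime_gt_1_nat by blast
  show ?case
  proof (cases "m = 1")
    case True
    have "Fset p = insert p (Fset (fstep p))" using Fset_step p1 by simp
    moreover have "fstep p = p - 1" using p by (simp add: fstep_def)
    ultimately show ?thesis using True by (simp add: Fset_Suc0)
  next
    case False
    then have m1: "m > 1" using less.prems by simp
    obtain q where q: "prime q" "q dvd m" "\<forall>r. prime r \<and> r dvd m \<longrightarrow> q \<le> r"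
      using least_prime_ex[OF m1] by blast
    have qp: "q \<le> p" using q less.prems by blast
    have q1: "q > 1" using q prime_gt_1_nat by blast
    have fm: "fstep m = (m div q) * (q - 1)" using fstep_eq[OF m1 q] .
    have mp1: "m * p > 1" using m1 p1 by (metis less_1_mult)
    have qmp: "q dvd m * p" using q by simp
    have minmp: "\<forall>r. prime r \<and> r dvd m * p \<longrightarrow> q \<le> r"
    proof (intro allI impI)
      fix r assume r: "prime r \<and> r dvd m * p"
      then have "r dvd m \<or> r dvd p" using prime_dvd_mult_iff by blast
      then show "q \<le> r"
      proof
        assume "r dvd m" then show ?thesis using q r by blast
      next
        assume "r dvd p" then have "r = p" using r p by (simp add: primes_dvd_imp_eq)
        then show ?thesis using qp by simp
      qed
    qed
    have fmp: "fstep (m * p) = (m * p div q) * (q - 1)" using fstep_eq[OF mp1 q(1) qmp minmp] .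
    obtain e where e: "m = q * e" using q(2) by blast
    have "m * p div q = (m div q) * p" using e q1 by (simp add: mult.assoc)
    hence fmp2: "fstep (m * p) = fstep m * p" using fmp fm by simp
    have b: "fstep m < m \<and> fstep m \<ge> 1" using fstep_bounds[OF m1] .
    have pr: "\<forall>r. prime r \<and> r dvd fstep m \<longrightarrow> r \<le> p"
    proof (intro allI impI)
      fix r assume r: "prime r \<and> r dvd fstep m"
      then have "r dvd m div q \<or> r dvd q - 1" using fm prime_dvd_mult_iff by auto
      then show "r \<le> p"
      proof
        assume "r dvd m div q"
        then have "r dvd m" using q(2) by (metis dvd_mult dvd_mult_div_cancel)
        then show ?thesis using less.prems r by blast
      next
        assume "r dvd q - 1"
        then have "r \<le> q - 1" using q1 by (simp add: dvd_imp_le)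
        then show ?thesis using qp by simp
      qed
    qed
    have IH: "Fset (fstep m * p) = (\<lambda>x. p * x) ` Fset (fstep m) \<union> Fset (p - 1)"
      using less.IH b pr by blast
    have "Fset (m * p) = insert (m * p) (Fset (fstep (m * p)))"
      using Fset_step[of "m * p"] mp1 by linarith
    also have "\<dots> = insert (m * p) ((\<lambda>x. p * x) ` Fset (fstep m) \<union> Fset (p - 1))"
      using fmp2 IH by simp
    also have "\<dots> = (\<lambda>x. p * x) ` Fset m \<union> Fset (p - 1)"
      using Fset_step[OF False] by (auto simp: mult.commute)
    finally show ?thesis .
  qed
qed

theorem proposition5:
  fixes n p :: nat
  assumes "n > 1"
    and "Fset n = Dset n"
    and "prime p" and "p dvd n"
    and "\<forall>q. prime q \<and> q dvd n \<longrightarrow> q \<le> p"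
  shows "Fset (n div p) = Dset (n div p) \<and> Fset (n * p) = Dset (n * p)"
proof -
  have p1: "p > 1" using assms(3) prime_gt_1_nat by blast
  define m where "m = n div p"
  have nm: "n = m * p" using assms(4) m_def by simp
  have m1: "m \<ge> 1" using nm assms(1) by (cases m) auto
  have pm: "\<forall>q. prime q \<and> q dvd m \<longrightarrow> q \<le> p" using assms(5) nm by auto
  have FA: "Fset n = (\<lambda>x. p * x) ` Fset m \<union> Fset (p - 1)"
    using Fset_mult[OF assms(3) m1 pm] nm by simp
  have Fp: "Fset (p - 1) \<subseteq> {1..p-1}" using Fset_bound p1 by simp
  have Fm: "Fset m \<subseteq> {1..m}" using Fset_bound m1 by simp
  have c1: "Fset m = Dset m"
  proof
    show "Fset m \<subseteq> Dset m"
    proof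
      fix x assume x: "x \<in> Fset m"
      then have "p * x \<in> Dset n" using FA assms(2) by blast
      then show "x \<in> Dset m" using nm p1 unfolding Dset_def by (auto simp: mult.commute)
    qed
    show "Dset m \<subseteq> Fset m"
    proof
      fix x assume x: "x \<in> Dset m"
      then have "p * x \<in> Dset n" using nm unfolding Dset_def using p1 by (auto simp: mult.commute)
      then have "p * x \<in> (\<lambda>x. p * x) ` Fset m \<union> Fset (p - 1)" using FA assms(2) by simp
      moreover have "p * x \<notin> Fset (p - 1)"
      proof
        assume "p * x \<in> Fset (p - 1)"
        then have "p * x \<le> p - 1" using Fp by auto
        moreover have "x \<ge> 1" using x unfolding Dset_def by auto
        moreover have "p \<le> p * x" using \<open>x \<ge> 1\<close> by simp
        ultimately show False using p1 by linarith
      qed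
      ultimately show "x \<in> Fset m" using p1 by auto
    qed
  qed
  have pn: "\<forall>q. prime q \<and> q dvd n \<longrightarrow> q \<le> p" using assms(5) .
  have FB: "Fset (n * p) = (\<lambda>x. p * x) ` Fset n \<union> Fset (p - 1)"
    using Fset_mult[OF assms(3) _ pn] assms(1) by simp
  have FpD: "Fset (p - 1) = {d \<in> Dset n. \<not> p dvd d}"
  proof
    show "Fset (p - 1) \<subseteq> {d \<in> Dset n. \<not> p dvd d}"
    proof
      fix d assume d: "d \<in> Fset (p - 1)"
      then have "d \<in> Dset n" using FA assms(2) by blast
      moreover have "1 \<le> d \<and> d \<le> p - 1" using d Fp by auto
      then have "\<not> p dvd d" using p1 by (auto dest: dvd_imp_le)
      ultimately show "d \<in> {d \<in> Dset n. \<not> p dvd d}" by simp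
    qed
    show "{d \<in> Dset n. \<not> p dvd d} \<subseteq> Fset (p - 1)"
    proof
      fix d assume d: "d \<in> {d \<in> Dset n. \<not> p dvd d}"
      then have "d \<in> (\<lambda>x. p * x) ` Fset m \<union> Fset (p - 1)" using FA assms(2) by simp
      then show "d \<in> Fset (p - 1)" using d by auto
    qed
  qed
  have c2: "Fset (n * p) = Dset (n * p)"
  proof
    show "Fset (n * p) \<subseteq> Dset (n * p)"
      unfolding FB assms(2) FpD unfolding Dset_def using p1 by (auto simp: mult.commute)
    show "Dset (n * p) \<subseteq> Fset (n * p)"
    proof
      fix d assume d: "d \<in> Dset (n * p)"
      show "d \<in> Fset (n * p)"
      proof (cases "p dvd d")
        case True
        then obtain e where e: "d = p * e" by blast
        have "e \<in> Dset n" using d e p1 unfolding Dset_def by (auto simp: mult.commute)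
        then show ?thesis unfolding FB assms(2) using e by blast
      next
        case False
        then have "coprime p d" using assms(3) by (simp add: prime_imp_coprime)
        then have "d dvd n" using d unfolding Dset_def
          by (simp add: coprime_commute coprime_dvd_mult_left_iff)
        then have "d \<in> {d \<in> Dset n. \<not> p dvd d}" using d False unfolding Dset_def by auto
        then show ?thesis unfolding FB FpD by blast
      qed
    qed
  qed
  show ?thesis using c1 c2 m_def by simp
qed

end
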